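(* Let $X$ and $Y$ be mm-spaces. If $d_{\mathrm{Eur}}(X,Y)=0$, then $X$ and $Y$ are mm-isomorphic.
   Context: An mm-space is a complete separable metric space $(X,d_X)$ with a Borel probability measure $m_X$. $X$ and $Y$ are mm-isomorphic if there is an isometry $f:\operatorname{supp}m_X\to\operatorname{supp}m_Y$ with $f_*m_X=m_Y$. $\Pi(m_X,m_Y)$: Borel probability measures on $X\times Y$ with marginals $m_X,m_Y$. $\{|d_X-d_Y|>\varepsilon\}:=\{(x_1,y_1,x_2,y_2)\in X\times Y\times X\times Y:|d_X(x_1,x_2)-d_Y(y_1,y_2)|>\varepsilon\}$. $d_{\mathrm{Eur}}(X,Y):=\inf_{\pi\in\Pi(m_X,m_Y)}\inf_{\varepsilon\ge0}\max\{\varepsilon,(\pi\otimes\pi)(|d_X-d_Y|>\varepsilon)\}$. *)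

theory Defs
  imports "HOL-Probability.Probability"
begin

text \<open>An mm-space: the underlying complete separable metric space is the type
  (class polish_space), together with a Borel probability measure.\<close>
definition mm_space :: "'a::polish_space measure \<Rightarrow> bool" where
  "mm_space M \<longleftrightarrow> prob_space M \<and> sets M = sets borel"

definition mm_support :: "'a::topological_space measure \<Rightarrow> 'a set" where
  "mm_support M = {x. \<forall>U. open U \<and> x \<in> U \<longrightarrow> emeasure M U > 0}"

definition mm_isomorphic :: "'a::polish_space measure \<Rightarrow> 'b::polish_space measure \<Rightarrow> bool" where
  "mm_isomorphic mX mY \<longleftrightarrow>
     (\<exists>f. bij_betw f (mm_support mX) (mm_support mY) \<and>
          (\<forall>x\<in>mm_support mX. \<forall>x'\<in>mm_support mX. dist (f x) (f x') = dist x x') \<and>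
          (\<forall>B\<in>sets mY. emeasure mY B = emeasure mX (f -` B \<inter> mm_support mX)))"

definition couplings :: "'a::polish_space measure \<Rightarrow> 'b::polish_space measure \<Rightarrow> ('a \<times> 'b) measure set" where
  "couplings mX mY = {\<pi>. prob_space \<pi> \<and> sets \<pi> = sets borel \<and>
       distr \<pi> borel fst = mX \<and> distr \<pi> borel snd = mY}"

definition dist_gap_set :: "real \<Rightarrow> (('a::metric_space \<times> 'b::metric_space) \<times> ('a \<times> 'b)) set" where
  "dist_gap_set \<epsilon> = {((x1, y1), (x2, y2)). \<bar>dist x1 x2 - dist y1 y2\<bar> > \<epsilon>}"

definition d_Eur :: "'a::polish_space measure \<Rightarrow> 'b::polish_space measure \<Rightarrow> real" where
  "d_Eur mX mY = (INF \<pi>\<in>couplings mX mY. INF \<epsilon>\<in>{0..}.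
      max \<epsilon> (measure (\<pi> \<Otimes>\<^sub>M \<pi>) (dist_gap_set \<epsilon>)))"

end

theory Submission
  imports Defs "HOL-Library.Diagonal_Subsequence"
begin


lemma mm_space_space: "mm_space M \<Longrightarrow> space M = UNIV"
  by (metis mm_space_def sets_eq_imp_space_eq space_borel)

lemma mm_space_sets: "mm_space M \<Longrightarrow> A \<in> sets borel \<Longrightarrow> A \<in> sets M"
  by (simp add: mm_space_def)

lemma mm_space_prob: "mm_space M \<Longrightarrow> prob_space M"
  by (simp add: mm_space_def)

lemma support_closed: "closed (mm_support M)"
proof -
  have "open (- mm_support M)"
  proof (rule topological_space_class.openI)
    fix x assume "x \<in> - mm_support M"
    then obtain U where U: "open U" "x \<in> U" "\<not> emeasure M U > 0"
      unfolding mm_support_def by blast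
    then have "U \<subseteq> - mm_support M" unfolding mm_support_def by blast
    with U show "\<exists>T. open T \<and> x \<in> T \<and> T \<subseteq> - mm_support M" by blast
  qed
  then show ?thesis by (simp add: closed_def)
qed

lemma support_null:
  assumes M: "mm_space M"
  shows "emeasure M (- mm_support M) = 0"
proof -
  obtain B :: "'a set set" where B: "countable B" "topological_basis B"
    using ex_countable_basis by blast
  define N where "N = {b\<in>B. emeasure M b = 0}"
  have "(\<Union>b\<in>N. b) \<in> null_sets M"
  proof (rule null_sets_UN')
    show "countable N" using B(1) unfolding N_def by simp
    fix b assume b: "b \<in> N"
    then have "b \<in> sets M" 
      using topological_basis_open[OF B(2)] M unfolding N_def by (blast intro: mm_space_sets borel_open)
    with b show "b \<in> null_sets M" unfolding N_def by blast
  qed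
  moreover have "- mm_support M \<subseteq> (\<Union>b\<in>N. b)"
  proof
    fix x assume "x \<in> - mm_support M"
    then obtain U where U: "open U" "x \<in> U" "\<not> emeasure M U > 0"
      unfolding mm_support_def by blast
    obtain b where b: "b \<in> B" "x \<in> b" "b \<subseteq> U"
      using topological_basisE[OF B(2) U(1) U(2)] by blast
    have "U \<in> sets M" using M U(1) by (blast intro: mm_space_sets borel_open)
    then have "emeasure M b \<le> emeasure M U"
      by (rule emeasure_mono[OF b(3)])
    then have "emeasure M b = 0" using U(3) by (simp add: not_gr_zero)
    with b show "x \<in> (\<Union>b\<in>N. b)" unfolding N_def by blast
  qed
  moreover have "- mm_support M \<in> sets M"
    by (intro mm_space_sets[OF M] borel_open) (simp add: open_Compl support_closed)
  ultimately show ?thesis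
    by (meson null_sets_subset null_setsD1)
qed

lemma support_measure:
  assumes M: "mm_space M"
  shows "emeasure M (mm_support M) = 1" "measure M (mm_support M) = 1"
proof -
  interpret prob_space M using M by (simp add: mm_space_def)
  have S: "mm_support M \<in> sets M" using M support_closed by (blast intro: mm_space_sets borel_closed)
  have "measure M (- mm_support M) = 0"
    using support_null[OF M] by (simp add: measure_def)
  moreover have "- mm_support M = space M - mm_support M" using mm_space_space[OF M] by auto
  ultimately show "measure M (mm_support M) = 1" using prob_compl[OF S] by simp
  then show "emeasure M (mm_support M) = 1" using emeasure_eq_measure by simp
qed

lemma support_ball_pos:
  assumes M: "mm_space M" and x: "x \<in> mm_support M" and r: "r > 0"
  shows "measure M (ball x r) > 0"
proof -
  interpret prob_space M using M by (simp add: mm_space_def)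
  have "emeasure M (ball x r) > 0" using x r unfolding mm_support_def by auto
  then show ?thesis using emeasure_eq_measure by (simp add: zero_less_measure_iff)
qed

lemma couplings_nonempty:
  fixes mX :: "'a::polish_space measure" and mY :: "'b::polish_space measure"
  assumes X: "mm_space mX" and Y: "mm_space mY"
  shows "mX \<Otimes>\<^sub>M mY \<in> couplings mX mY"
proof -
  interpret PX: prob_space mX using X by (simp add: mm_space_def)
  interpret PY: prob_space mY using Y by (simp add: mm_space_def)
  interpret P: pair_prob_space mX mY by unfold_locales
  have sX: "sets mX = sets borel" and sY: "sets mY = sets borel" using X Y by (auto simp: mm_space_def)
  have sP: "sets (mX \<Otimes>\<^sub>M mY) = sets (borel :: ('a \<times> 'b) measure)"
    using sets_pair_measure_cong[OF sX sY] borel_prod by metis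
  have "distr (mX \<Otimes>\<^sub>M mY) borel fst = distr (mX \<Otimes>\<^sub>M mY) mX fst"
    by (rule distr_cong) (auto simp: sX)
  also have "\<dots> = mX" by (rule PY.distr_pair_fst)
  finally have d1: "distr (mX \<Otimes>\<^sub>M mY) borel fst = mX" .
  have d2: "distr (mX \<Otimes>\<^sub>M mY) borel snd = mY"
  proof (rule measure_eqI)
    show "sets (distr (mX \<Otimes>\<^sub>M mY) borel snd) = sets mY" by (simp add: sY)
    fix A assume "A \<in> sets (distr (mX \<Otimes>\<^sub>M mY) borel snd)"
    then have A: "A \<in> sets borel" by simp
    then have A': "A \<in> sets mY" by (simp add: sY)
    have m: "snd \<in> measurable (mX \<Otimes>\<^sub>M mY) borel"
      using measurable_snd measurable_cong_sets[OF refl sY] by blast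
    have "emeasure (distr (mX \<Otimes>\<^sub>M mY) borel snd) A = emeasure (mX \<Otimes>\<^sub>M mY) (snd -` A \<inter> space (mX \<Otimes>\<^sub>M mY))"
      by (rule emeasure_distr[OF m A])
    also have "snd -` A \<inter> space (mX \<Otimes>\<^sub>M mY) = space mX \<times> A"
      using mm_space_space[OF X] mm_space_space[OF Y] by (auto simp: space_pair_measure)
    also have "emeasure (mX \<Otimes>\<^sub>M mY) (space mX \<times> A) = emeasure mX (space mX) * emeasure mY A"
      by (rule PY.emeasure_pair_measure_Times) (auto simp: A')
    finally show "emeasure (distr (mX \<Otimes>\<^sub>M mY) borel snd) A = emeasure mY A"
      by (simp add: PX.emeasure_space_1)
  qed
  show ?thesis unfolding couplings_def
    using sP d1 d2 P.prob_space_axioms by blast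
qed

lemma dEur_small:
  fixes mX :: "'a::polish_space measure" and mY :: "'b::polish_space measure"
  assumes X: "mm_space mX" and Y: "mm_space mY" and E: "d_Eur mX mY = 0" and tau: "\<tau> > 0"
  shows "\<exists>\<pi>\<in>couplings mX mY. \<exists>e\<ge>0. max e (measure (\<pi> \<Otimes>\<^sub>M \<pi>) (dist_gap_set e)) < \<tau>"
proof -
  define G where "G \<pi> = (INF e\<in>{0..}. max e (measure (\<pi> \<Otimes>\<^sub>M \<pi>) (dist_gap_set e)))" for \<pi> :: "('a \<times> 'b) measure"
  have G0: "0 \<le> G \<pi>" for \<pi>
    unfolding G_def by (rule cINF_greatest) auto
  have Gb: "bdd_below ((\<lambda>e. max e (measure (\<pi> \<Otimes>\<^sub>M \<pi>) (dist_gap_set e))) ` {0..})" for \<pi> :: "('a \<times> 'b) measure"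
    by (rule bdd_belowI[of _ 0]) auto
  have ne: "couplings mX mY \<noteq> {}" using couplings_nonempty[OF X Y] by blast
  have "(INF \<pi>\<in>couplings mX mY. G \<pi>) < \<tau>" using E tau unfolding d_Eur_def G_def by simp
  then obtain \<pi> where \<pi>: "\<pi> \<in> couplings mX mY" "G \<pi> < \<tau>"
    using cINF_less_iff[OF ne, of G \<tau>] G0 by (metis bdd_belowI2)
  then obtain e where "e \<in> {0..}" "max e (measure (\<pi> \<Otimes>\<^sub>M \<pi>) (dist_gap_set e)) < \<tau>"
    unfolding G_def using cINF_less_iff[of "{0::real..}", OF _ Gb] by auto
  with \<pi> show ?thesis by auto
qed



lemma approx:
  fixes mX :: "'a::polish_space measure" and mY :: "'b::polish_space measure" and x :: "nat \<Rightarrow> 'a"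
  assumes X: "mm_space mX" and Y: "mm_space mY" and E: "d_Eur mX mY = 0" and dpos: "\<delta> > 0"
    and xs: "\<And>i. i < N \<Longrightarrow> x i \<in> mm_support mX"
  shows "\<exists>y. (\<forall>i<N. \<forall>j<N. \<bar>dist (x i) (x j) - dist (y i) (y j)\<bar> \<le> \<delta>) \<and>
    (\<forall>I. I \<subseteq> {..<N} \<longrightarrow> (\<forall>\<rho>>0. measure mX (\<Union>i\<in>I. ball (x i) \<rho>)
        \<le> measure mY (\<Union>i\<in>I. cball (y i) (\<rho> + \<delta>)) + \<delta>))"
proof -
  define r where "r = \<delta> / 10"
  have r: "r > 0" using dpos by (simp add: r_def)
  define a where "a = Min (insert 1 ((\<lambda>i. measure mX (ball (x i) r)) ` {..<N}))"
  have a_pos: "a > 0" unfolding a_def using support_ball_pos[OF X xs r] by (auto simp: Min_gr_iff)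
  have a_le: "a \<le> measure mX (ball (x i) r)" if "i < N" for i
    unfolding a_def using that by (intro Min_le) auto
  define t where "t = min (a/3) (\<delta> / (real N + 1))"
  have t0: "t > 0" using a_pos dpos by (simp add: t_def)
  have t1: "3 * t \<le> a" by (simp add: t_def)
  have t2: "(real N + 1) * t \<le> \<delta>"
  proof -
    have "t \<le> \<delta> / (real N + 1)" by (simp add: t_def)
    then show ?thesis by (simp add: field_simps)
  qed
  define \<tau> where "\<tau> = min r (t * a / 2)"
  have tau0: "\<tau> > 0" using r t0 a_pos by (simp add: \<tau>_def)
  obtain \<pi> e where \<pi>C: "\<pi> \<in> couplings mX mY" and e0: "e \<ge> 0"
    and em: "max e (measure (\<pi> \<Otimes>\<^sub>M \<pi>) (dist_gap_set e)) < \<tau>"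
    using dEur_small[OF X Y E tau0] by blast
  have er: "e < r" and Gm: "measure (\<pi> \<Otimes>\<^sub>M \<pi>) (dist_gap_set e) < \<tau>"
    using em by (auto simp: \<tau>_def)
  have \<pi>p: "prob_space \<pi>" and s\<pi>: "sets \<pi> = sets borel"
    and dX: "distr \<pi> borel fst = mX" and dY: "distr \<pi> borel snd = mY"
    using \<pi>C unfolding couplings_def by auto
  interpret P: prob_space \<pi> by (rule \<pi>p)
  interpret PP: pair_prob_space \<pi> \<pi> by unfold_locales
  have sp\<pi>: "space \<pi> = UNIV" by (metis s\<pi> sets_eq_imp_space_eq space_borel)
  have mfst: "fst \<in> measurable \<pi> borel"
    by (subst measurable_cong_sets[OF s\<pi> refl])
      (rule borel_measurable_continuous_onI[OF continuous_on_fst[OF continuous_on_id]])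
  have msnd: "snd \<in> measurable \<pi> borel"
    by (subst measurable_cong_sets[OF s\<pi> refl])
      (rule borel_measurable_continuous_onI[OF continuous_on_snd[OF continuous_on_id]])
  have fst_sets: "fst -` A \<in> sets \<pi>" if "A \<in> sets borel" for A
    using measurable_sets[OF mfst that] by (simp add: sp\<pi>)
  have snd_sets: "snd -` A \<in> sets \<pi>" if "A \<in> sets borel" for A
    using measurable_sets[OF msnd that] by (simp add: sp\<pi>)
  have mX_fst: "measure mX A = measure \<pi> (fst -` A)" if "A \<in> sets borel" for A
  proof -
    have "measure mX A = measure (distr \<pi> borel fst) A" by (simp add: dX)
    also have "\<dots> = measure \<pi> (fst -` A \<inter> space \<pi>)" by (rule measure_distr[OF mfst that])
    finally show ?thesis by (simp add: sp\<pi>)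
  qed
  have mY_snd: "measure mY A = measure \<pi> (snd -` A)" if "A \<in> sets borel" for A
  proof -
    have "measure mY A = measure (distr \<pi> borel snd) A" by (simp add: dY)
    also have "\<dots> = measure \<pi> (snd -` A \<inter> space \<pi>)" by (rule measure_distr[OF msnd that])
    finally show ?thesis by (simp add: sp\<pi>)
  qed
  define sec where "sec p = {q. e < \<bar>dist (fst p) (fst q) - dist (snd p) (snd q)\<bar>}" for p :: "'a \<times> 'b"
  have sec_open: "open (sec p)" for p
    unfolding sec_def by (intro open_Collect_less continuous_intros)
  have sec_sets: "sec p \<in> sets \<pi>" for p using sec_open[of p] by (simp add: s\<pi>)
  define G where "G = (dist_gap_set e :: (('a \<times> 'b) \<times> ('a \<times> 'b)) set)"
  have G_eq: "G = {z. e < \<bar>dist (fst (fst z)) (fst (snd z)) - dist (snd (fst z)) (snd (snd z))\<bar>}"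
    unfolding G_def dist_gap_set_def by auto
  have G_sets: "G \<in> sets (\<pi> \<Otimes>\<^sub>M \<pi>)"
  proof -
    have "sets (\<pi> \<Otimes>\<^sub>M \<pi>) = sets (borel :: (('a \<times> 'b) \<times> ('a \<times> 'b)) measure)"
      using sets_pair_measure_cong[OF s\<pi> s\<pi>] borel_prod by metis
    moreover have "open G" unfolding G_eq by (intro open_Collect_less continuous_intros)
    ultimately show ?thesis by simp
  qed
  have sec_eq: "Pair p -` G = sec p" for p unfolding G_eq sec_def by auto
  have int: "emeasure (\<pi> \<Otimes>\<^sub>M \<pi>) G = (\<integral>\<^sup>+p. emeasure \<pi> (sec p) \<partial>\<pi>)"
    using P.emeasure_pair_measure_alt[OF G_sets] sec_eq by simp
  have Gsmall: "emeasure (\<pi> \<Otimes>\<^sub>M \<pi>) G < ennreal \<tau>"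
    unfolding G_def PP.emeasure_eq_measure using Gm tau0 by (intro ennreal_lessI)
  have ex: "\<exists>q. fst q \<in> ball (x i) r \<and> emeasure \<pi> (sec q) \<le> ennreal t" if i: "i < N" for i
  proof (rule ccontr)
    assume nt: "\<not> ?thesis"
    have h: "ennreal t * indicator (fst -` ball (x i) r) q \<le> emeasure \<pi> (sec q)" for q
    proof (cases "fst q \<in> ball (x i) r")
      case True
      then have "ennreal t < emeasure \<pi> (sec q)" using nt by (meson not_le)
      then show ?thesis using True by simp
    next
      case False then show ?thesis by simp
    qed
    have A: "fst -` ball (x i) r \<in> sets \<pi>" by (rule fst_sets) simp
    have "ennreal t * emeasure \<pi> (fst -` ball (x i) r)
        = (\<integral>\<^sup>+q. ennreal t * indicator (fst -` ball (x i) r) q \<partial>\<pi>)"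
      using nn_integral_cmult_indicator[OF A, of "ennreal t"] by simp
    also have "\<dots> \<le> (\<integral>\<^sup>+q. emeasure \<pi> (sec q) \<partial>\<pi>)" by (rule nn_integral_mono) (rule h)
    also have "\<dots> < ennreal \<tau>" using int Gsmall by simp
    finally have lt: "ennreal t * emeasure \<pi> (fst -` ball (x i) r) < ennreal \<tau>" .
    define m where "m = measure mX (ball (x i) r)"
    have m0: "m \<ge> 0" unfolding m_def by simp
    have "emeasure \<pi> (fst -` ball (x i) r) = ennreal m"
      using mX_fst[of "ball (x i) r"] P.emeasure_eq_measure unfolding m_def by simp
    with lt have "ennreal (t * m) < ennreal \<tau>"
      using t0 m0 by (simp add: ennreal_mult)
    then have "t * m < \<tau>" using t0 m0 by (simp add: ennreal_less_iff)
    moreover have "t * a \<le> t * m" using a_le[OF i] t0 unfolding m_def by simp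
    moreover have "\<tau> \<le> t * a / 2" by (simp add: \<tau>_def)
    moreover have "t * a > 0" using t0 a_pos by simp
    ultimately show False by linarith
  qed
  then have "\<forall>i. \<exists>q. i < N \<longrightarrow> fst q \<in> ball (x i) r \<and> emeasure \<pi> (sec q) \<le> ennreal t"
    by blast
  then obtain p where p: "\<And>i. i < N \<Longrightarrow> fst (p i) \<in> ball (x i) r \<and> emeasure \<pi> (sec (p i)) \<le> ennreal t"
    by metis
  have pd: "dist (x i) (fst (p i)) < r" if "i < N" for i using p[OF that] by simp
  have ps: "measure \<pi> (sec (p i)) \<le> t" if "i < N" for i
    using p[OF that] P.emeasure_eq_measure t0 by (simp add: ennreal_le_iff)
  define y where "y i = snd (p i)" for i
  have part1: "\<bar>dist (x i) (x j) - dist (y i) (y j)\<bar> \<le> \<delta>" if i: "i < N" and j: "j < N" for i j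
  proof -
    let ?A = "fst -` ball (x j) r"
    have A: "?A \<in> sets \<pi>" by (rule fst_sets) simp
    have "?A - (sec (p i) \<union> sec (p j)) \<noteq> {}"
    proof
      assume "?A - (sec (p i) \<union> sec (p j)) = {}"
      then have sub: "?A \<subseteq> sec (p i) \<union> sec (p j)" by blast
      have "measure \<pi> ?A \<le> measure \<pi> (sec (p i) \<union> sec (p j))"
        by (rule P.finite_measure_mono[OF sub]) (auto simp: sec_sets)
      also have "\<dots> \<le> measure \<pi> (sec (p i)) + measure \<pi> (sec (p j))"
        by (rule measure_Un_le) (auto simp: sec_sets)
      finally have "measure \<pi> ?A \<le> 2 * t" using ps[OF i] ps[OF j] by linarith
      moreover have "measure \<pi> ?A \<ge> a" using a_le[OF j] mX_fst[of "ball (x j) r"] by simp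
      ultimately show False using t1 t0 a_pos by linarith
    qed
    then obtain q where q0: "q \<in> ?A" and q2: "q \<notin> sec (p i)" and q3: "q \<notin> sec (p j)" by blast
    from q0 have q1: "dist (x j) (fst q) < r" by simp
    note q = q1 q2 q3
    have h1: "\<bar>dist (fst (p i)) (fst q) - dist (y i) (snd q)\<bar> \<le> e" using q(2) unfolding sec_def y_def by auto
    have h2: "\<bar>dist (fst (p j)) (fst q) - dist (y j) (snd q)\<bar> \<le> e" using q(3) unfolding sec_def y_def by auto
    have d1: "dist (x i) (fst (p i)) < r" by (rule pd[OF i])
    have d2: "dist (x j) (fst (p j)) < r" by (rule pd[OF j])
    have t1: "dist (x i) (x j) \<le> dist (x i) (fst (p i)) + dist (fst (p i)) (fst q) + dist (x j) (fst q)" by metric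
    have t2: "dist (fst (p i)) (fst q) \<le> dist (x i) (fst (p i)) + dist (x i) (x j) + dist (x j) (fst q)" by metric
    have t3: "dist (y i) (y j) \<le> dist (y i) (snd q) + dist (y j) (snd q)" by metric
    have t4: "dist (y i) (snd q) \<le> dist (y i) (y j) + dist (y j) (snd q)" by metric
    have t5: "dist (fst (p j)) (fst q) \<le> dist (x j) (fst (p j)) + dist (x j) (fst q)" by metric
    show ?thesis using h1 h2 d1 d2 q(1) t1 t2 t3 t4 t5 er unfolding r_def abs_le_iff by linarith
  qed
  have part2: "measure mX (\<Union>i\<in>I. ball (x i) \<rho>) \<le> measure mY (\<Union>i\<in>I. cball (y i) (\<rho> + \<delta>)) + \<delta>"
    if I: "I \<subseteq> {..<N}" and rho: "\<rho> > 0" for I \<rho>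
  proof -
    define U where "U = (\<Union>i\<in>I. ball (x i) \<rho>)"
    define V where "V = (\<Union>i\<in>I. cball (y i) (\<rho> + \<delta>))"
    have fI: "finite I" using I finite_subset by blast
    have Uo: "open U" unfolding U_def by (intro open_UN) auto
    have Vc: "closed V" unfolding V_def using fI by (intro closed_UN) auto
    have sub: "fst -` U \<subseteq> snd -` V \<union> (\<Union>i\<in>I. sec (p i))"
    proof
      fix z :: "'a \<times> 'b" assume "z \<in> fst -` U"
      then obtain i where i: "i \<in> I" "dist (x i) (fst z) < \<rho>" unfolding U_def by auto
      show "z \<in> snd -` V \<union> (\<Union>i\<in>I. sec (p i))"
      proof (cases "dist (y i) (snd z) \<le> \<rho> + \<delta>")
        case True then show ?thesis using i unfolding V_def by auto
      next
        case False
        have iN: "i < N" using i I by auto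
        have tr: "dist (fst (p i)) (fst z) \<le> dist (x i) (fst (p i)) + dist (x i) (fst z)" by metric
        have "e < \<bar>dist (fst (p i)) (fst z) - dist (snd (p i)) (snd z)\<bar>"
          using False i(2) tr pd[OF iN] er unfolding r_def y_def by linarith
        then have "z \<in> sec (p i)" unfolding sec_def by simp
        then show ?thesis using i by auto
      qed
    qed
    have Vs: "snd -` V \<in> sets \<pi>" using Vc by (intro snd_sets) simp
    have Ss: "(\<Union>i\<in>I. sec (p i)) \<in> sets \<pi>" using fI sec_sets by auto
    have "measure mX U = measure \<pi> (fst -` U)" using Uo by (intro mX_fst) simp
    also have "\<dots> \<le> measure \<pi> (snd -` V \<union> (\<Union>i\<in>I. sec (p i)))"
      by (rule P.finite_measure_mono[OF sub]) (use Vs Ss in auto)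
    also have "\<dots> \<le> measure \<pi> (snd -` V) + measure \<pi> (\<Union>i\<in>I. sec (p i))"
      by (rule measure_Un_le) (use Vs Ss in auto)
    finally have le1: "measure mX U \<le> measure \<pi> (snd -` V) + measure \<pi> (\<Union>i\<in>I. sec (p i))" .
    have "measure \<pi> (\<Union>i\<in>I. sec (p i)) \<le> (\<Sum>i\<in>I. measure \<pi> (sec (p i)))"
      by (rule P.finite_measure_subadditive_finite[OF fI]) (auto simp: sec_sets)
    also have "\<dots> \<le> (\<Sum>i\<in>I. t)" by (rule sum_mono) (use ps I in auto)
    also have "\<dots> = real (card I) * t" by simp
    also have "\<dots> \<le> (real N + 1) * t"
    proof -
      have "card I \<le> card {..<N}" using I by (intro card_mono) auto
      then have "real (card I) \<le> real N + 1" by simp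
      then show ?thesis using t0 by (intro mult_right_mono) auto
    qed
    finally have le2: "measure \<pi> (\<Union>i\<in>I. sec (p i)) \<le> \<delta>" using t2 by linarith
    have "measure mY V = measure \<pi> (snd -` V)" using Vc by (intro mY_snd) simp
    with le1 le2 show ?thesis unfolding U_def V_def by linarith
  qed
  show ?thesis using part1 part2 by blast
qed



lemma dense_seq:
  fixes M :: "'a::polish_space measure"
  assumes M: "mm_space M"
  shows "\<exists>x::nat \<Rightarrow> 'a. (\<forall>i. x i \<in> mm_support M) \<and> (\<forall>z\<in>mm_support M. \<forall>e>0. \<exists>i. dist (x i) z < e)"
proof -
  define S where "S = mm_support M"
  have "S \<noteq> {}" using support_measure(2)[OF M] unfolding S_def by auto
  then obtain z0 where z0: "z0 \<in> S" by blast
  obtain B :: "'a set set" where B: "countable B" "topological_basis B"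
    using ex_countable_basis by blast
  define C where "C = {b\<in>B. b \<inter> S \<noteq> {}}"
  define D where "D = (\<lambda>b. SOME z. z \<in> b \<inter> S) ` C"
  have DS: "D \<subseteq> S" unfolding D_def C_def by (auto intro: someI2_ex)
  have cD: "countable D" unfolding D_def C_def using B(1) by simp
  have dense: "\<exists>w\<in>D. dist w z < e" if z: "z \<in> S" and e: "e > 0" for z e
  proof -
    obtain b where b: "b \<in> B" "z \<in> b" "b \<subseteq> ball z e"
      using topological_basisE[OF B(2), of "ball z e" z] e by auto
    then have bC: "b \<in> C" using z unfolding C_def by blast
    define w where "w = (SOME z. z \<in> b \<inter> S)"
    have "w \<in> b \<inter> S" unfolding w_def by (rule someI[of _ z]) (use b z in blast)
    then have "dist w z < e" using b by (auto simp: dist_commute)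
    moreover have "w \<in> D" unfolding D_def w_def using bC by blast
    ultimately show ?thesis by blast
  qed
  have Dne: "D \<noteq> {}" using dense[OF z0, of 1] by auto
  define x where "x = from_nat_into D"
  have rx: "range x = D" unfolding x_def using range_from_nat_into[OF Dne cD] .
  have A: "\<forall>i. x i \<in> mm_support M" using rx DS S_def by blast
  have B: "\<forall>z\<in>mm_support M. \<forall>e>0. \<exists>i. dist (x i) z < e"
  proof (intro ballI allI impI)
    fix z and e :: real assume "z \<in> mm_support M" "e > 0"
    then obtain w where "w \<in> D" "dist w z < e" using dense S_def by blast
    then show "\<exists>i. dist (x i) z < e" using rx by (metis rangeE)
  qed
  show ?thesis using A B by blast
qed

lemma tight_compact:
  fixes mY :: "'b::polish_space measure" and w :: "nat \<Rightarrow> 'b"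
  assumes Y: "mm_space mY"
    and H: "\<And>\<rho>. \<rho> > 0 \<Longrightarrow> \<exists>a>0. \<exists>k0. \<forall>k\<ge>k0. a \<le> measure mY (cball (w k) \<rho>)"
  shows "compact (closure (range w))"
proof -
  interpret P: prob_space mY using Y by (simp add: mm_space_def)
  have sY: "sets mY = sets borel" using Y by (simp add: mm_space_def)
  have spY: "space mY = UNIV" using mm_space_space[OF Y] .
  have tb: "\<exists>k. finite k \<and> closure (range w) \<subseteq> (\<Union>x\<in>k. ball x \<epsilon>)" if eps: "\<epsilon> > 0" for \<epsilon>
  proof -
    define \<rho> where "\<rho> = \<epsilon> / 4"
    have rho: "\<rho> > 0" using eps by (simp add: \<rho>_def)
    obtain a k0 where a: "a > 0" and ak: "\<And>k. k \<ge> k0 \<Longrightarrow> a \<le> measure mY (cball (w k) \<rho>)"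
      using H[OF rho] by blast
    have "emeasure mY UNIV = (SUP K\<in>{K. K \<subseteq> UNIV \<and> compact K}. emeasure mY K)"
      by (rule inner_regular[OF sY]) (auto simp: spY)
    moreover have "ennreal (1 - a) < emeasure mY UNIV"
      using a P.emeasure_space_1 spY by (simp add: ennreal_lessI)
    ultimately obtain K where K: "compact K" "ennreal (1 - a) < emeasure mY K"
      by (auto simp: less_SUP_iff)
    have Ks: "K \<in> sets mY" using K(1) sY by (simp add: compact_imp_closed borel_closed)
    have mK: "1 - a < measure mY K"
    proof (cases "1 - a \<ge> 0")
      case True then show ?thesis using K(2) P.emeasure_eq_measure by (auto simp: ennreal_less_iff)
    next
      case False then show ?thesis using measure_nonneg[of mY K] by linarith
    qed
    obtain F where F: "finite F" "K \<subseteq> (\<Union>x\<in>F. ball x \<rho>)"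
      using K(1) rho unfolding compact_eq_totally_bounded by blast
    have near: "\<exists>z\<in>F. dist z (w k) < 2 * \<rho>" if k: "k \<ge> k0" for k
    proof -
      have "cball (w k) \<rho> \<inter> K \<noteq> {}"
      proof
        assume dis: "cball (w k) \<rho> \<inter> K = {}"
        have cs: "cball (w k) \<rho> \<in> sets mY" using sY by simp
        have "measure mY (cball (w k) \<rho> \<union> K) = measure mY (cball (w k) \<rho>) + measure mY K"
          by (rule P.finite_measure_Union[OF cs Ks dis])
        moreover have "measure mY (cball (w k) \<rho> \<union> K) \<le> 1" by (rule P.prob_le_1)
        ultimately show False using ak[OF k] mK by linarith
      qed
      then obtain u where u: "dist (w k) u \<le> \<rho>" "u \<in> K" by auto
      then obtain z where z: "z \<in> F" "dist z u < \<rho>" using F(2) by auto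
      have "dist z (w k) \<le> dist z u + dist (w k) u" by metric
      then show ?thesis using u z by (intro bexI[OF _ z(1)]) linarith
    qed
    define F' where "F' = F \<union> w ` {..<k0}"
    have "closure (range w) \<subseteq> (\<Union>x\<in>F'. ball x \<epsilon>)"
    proof
      fix v assume "v \<in> closure (range w)"
      then obtain k where k: "dist (w k) v < \<rho>" using rho by (metis closure_approachable rangeE)
      show "v \<in> (\<Union>x\<in>F'. ball x \<epsilon>)"
      proof (cases "k < k0")
        case True
        then have "w k \<in> F'" unfolding F'_def by auto
        moreover have "v \<in> ball (w k) \<epsilon>" using k eps unfolding \<rho>_def by simp
        ultimately show ?thesis by blast
      next
        case False
        then obtain z where z: "z \<in> F" "dist z (w k) < 2 * \<rho>" using near by (meson not_le)
        have "dist z v \<le> dist z (w k) + dist (w k) v" by metric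
        then have "v \<in> ball z \<epsilon>" using z k eps unfolding \<rho>_def by simp
        moreover have "z \<in> F'" using z unfolding F'_def by blast
        ultimately show ?thesis by blast
      qed
    qed
    moreover have "finite F'" using F(1) unfolding F'_def by simp
    ultimately show ?thesis by blast
  qed
  have "uniform_space_class.complete (closure (range w))" by (simp add: complete_eq_closed)
  with tb show ?thesis unfolding compact_eq_totally_bounded by blast
qed

lemma inv_eventually_small:
  assumes "c > (0::real)"
  shows "\<forall>\<^sub>F k in sequentially. inverse (real (Suc k)) < c"
  using order_tendstoD(2)[OF LIMSEQ_inverse_real_of_nat assms] .



lemma iso_extend:
  fixes x :: "nat \<Rightarrow> 'a::metric_space" and g :: "nat \<Rightarrow> 'b::complete_space"
  assumes xS: "\<And>i. x i \<in> S" and xd: "\<And>z e. z \<in> S \<Longrightarrow> e > 0 \<Longrightarrow> \<exists>i. dist (x i) z < e"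
    and gi: "\<And>i j. dist (g i) (g j) = dist (x i) (x j)"
  shows "\<exists>F. (\<forall>u\<in>S. \<forall>v\<in>S. dist (F u) (F v) = dist u v) \<and> (\<forall>i. F (x i) = g i)"
proof -
  define f0 where "f0 z = g (SOME i. x i = z)" for z
  have f0x: "f0 (x i) = g i" for i
  proof -
    define j where "j = (SOME j. x j = x i)"
    have "x j = x i" unfolding j_def by (rule someI[of _ i]) simp
    then have "dist (g j) (g i) = 0" using gi[of j i] by simp
    then show ?thesis unfolding f0_def j_def[symmetric] by simp
  qed
  have iso0: "dist (f0 u) (f0 v) = dist u v" if "u \<in> range x" "v \<in> range x" for u v
    using that f0x gi by auto
  have uc: "uniformly_continuous_on (range x) f0"
    unfolding uniformly_continuous_on_def
  proof (intro allI impI)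
    fix e :: real assume "e > 0"
    then show "\<exists>d>0. \<forall>u\<in>range x. \<forall>v\<in>range x. dist v u < d \<longrightarrow> dist (f0 v) (f0 u) < e"
      using iso0 by (intro exI[of _ e]) auto
  qed
  obtain F where ucF: "uniformly_continuous_on (closure (range x)) F"
    and ext: "\<And>z. z \<in> range x \<Longrightarrow> f0 z = F z"
    using uniformly_continuous_on_extension_on_closure[OF uc] by metis
  have Scl: "S \<subseteq> closure (range x)"
  proof
    fix z assume z: "z \<in> S"
    show "z \<in> closure (range x)" unfolding closure_approachable
      using xd[OF z] by blast
  qed
  have isoF: "dist (F u) (F v) = dist u v" if u: "u \<in> closure (range x)" and v: "v \<in> closure (range x)" for u v
  proof (rule ccontr)
    assume ne: "dist (F u) (F v) \<noteq> dist u v"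
    define \<epsilon> where "\<epsilon> = \<bar>dist (F u) (F v) - dist u v\<bar> / 5"
    have eps: "\<epsilon> > 0" using ne unfolding \<epsilon>_def by simp
    obtain d where d: "d > 0" and dd: "\<And>a b. a \<in> closure (range x) \<Longrightarrow> b \<in> closure (range x) \<Longrightarrow> dist b a < d \<Longrightarrow> dist (F b) (F a) < \<epsilon>"
      using ucF eps unfolding uniformly_continuous_on_def by metis
    have md: "min d \<epsilon> > 0" using d eps by simp
    obtain u' where u': "u' \<in> range x" "dist u' u < min d \<epsilon>"
      using u md unfolding closure_approachable by blast
    obtain v' where v': "v' \<in> range x" "dist v' v < min d \<epsilon>"
      using v md unfolding closure_approachable by blast
    have cu: "u' \<in> closure (range x)" "v' \<in> closure (range x)" using u'(1) v'(1) closure_subset[of "range x"] by blast+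
    have Fu: "dist (F u') (F u) < \<epsilon>" using dd[OF u cu(1)] u' by simp
    have Fv: "dist (F v') (F v) < \<epsilon>" using dd[OF v cu(2)] v' by simp
    have e': "dist (F u') (F v') = dist u' v'" using iso0[OF u'(1) v'(1)] ext[OF u'(1)] ext[OF v'(1)] by simp
    have t1: "dist (F u) (F v) \<le> dist (F u') (F u) + dist (F u') (F v') + dist (F v') (F v)" by metric
    have t2: "dist (F u') (F v') \<le> dist (F u') (F u) + dist (F u) (F v) + dist (F v') (F v)" by metric
    have t3: "dist u v \<le> dist u' u + dist u' v' + dist v' v" by metric
    have t4: "dist u' v' \<le> dist u' u + dist u v + dist v' v" by metric
    have "\<bar>dist (F u) (F v) - dist u v\<bar> \<le> 4 * \<epsilon>"
      using t1 t2 t3 t4 Fu Fv e' u'(2) v'(2) by (simp add: abs_le_iff)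
    then show False using eps unfolding \<epsilon>_def by simp
  qed
  show ?thesis
  proof (intro exI conjI ballI allI)
    fix u v assume "u \<in> S" "v \<in> S"
    then show "dist (F u) (F v) = dist u v" using isoF Scl by blast
  next
    fix i show "F (x i) = g i" using ext[of "x i"] f0x by simp
  qed
qed

lemma comp_lim:
  fixes Y :: "nat \<Rightarrow> 'b::topological_space" and s r :: "nat \<Rightarrow> nat"
  assumes lim: "((\<lambda>m. Y (s m)) \<circ> r) \<longlonglongrightarrow> l"
  shows "\<exists>l. (\<lambda>m. Y ((s \<circ> r) m)) \<longlonglongrightarrow> l"
proof -
  have eq: "(\<lambda>m. Y ((s \<circ> r) m)) = ((\<lambda>m. Y (s m)) \<circ> r)" by (rule ext) simp
  show ?thesis by (rule exI[of _ l]) (subst eq, rule lim)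
qed

lemma diag_limits:
  fixes Ys :: "nat \<Rightarrow> nat \<Rightarrow> 'b::polish_space"
  assumes cpt: "\<And>i. compact (closure (range (\<lambda>k. Ys k i)))"
  shows "\<exists>\<sigma> g. strict_mono \<sigma> \<and> (\<forall>i. (\<lambda>m. Ys (\<sigma> m) i) \<longlonglongrightarrow> g i)"
proof -
  define P where "P i s \<longleftrightarrow> (\<exists>l. (\<lambda>m. Ys (s m) i) \<longlonglongrightarrow> l)" for i and s :: "nat \<Rightarrow> nat"
  interpret D: subseqs P
  proof (rule subseqs.intro)
    fix n and s :: "nat \<Rightarrow> nat" assume "strict_mono s"
    define C where "C = closure (range (\<lambda>k. Ys k n))"
    have inS: "\<forall>m. (\<lambda>m. Ys (s m) n) m \<in> C"
    proof
      fix m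
      have "Ys (s m) n \<in> range (\<lambda>k. Ys k n)" by (rule rangeI)
      then have "Ys (s m) n \<in> C" unfolding C_def by (rule closure_subset[THEN subsetD])
      then show "(\<lambda>m. Ys (s m) n) m \<in> C" by simp
    qed
    have sc: "seq_compact C" unfolding C_def using cpt[of n] by (rule compact_imp_seq_compact)
    have "(\<forall>m. (\<lambda>m. Ys (s m) n) m \<in> C) \<longrightarrow> (\<exists>l\<in>C. \<exists>r. strict_mono r \<and> ((\<lambda>m. Ys (s m) n) \<circ> r) \<longlonglongrightarrow> l)"
      using sc unfolding seq_compact_def by (rule spec)
    then obtain l r where "strict_mono r" "((\<lambda>m. Ys (s m) n) \<circ> r) \<longlonglongrightarrow> l"
      using inS by blast
    then show "\<exists>r'. strict_mono r' \<and> P n (s \<circ> r')"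
      unfolding P_def using comp_lim[of "\<lambda>k. Ys k n" s r l] by blast
  qed
  define \<sigma> where "\<sigma> = D.diagseq"
  have sm: "strict_mono \<sigma>" unfolding \<sigma>_def by (rule D.subseq_diagseq)
  have conv: "\<exists>l. (\<lambda>m. Ys (\<sigma> m) i) \<longlonglongrightarrow> l" for i
  proof -
    have "P i (D.diagseq \<circ> (+) (Suc i))"
    proof (rule D.diagseq_holds)
      fix r s n assume r: "strict_mono (r :: nat \<Rightarrow> nat)" and "P n s"
      then obtain l where "(\<lambda>m. Ys (s m) n) \<longlonglongrightarrow> l" unfolding P_def by blast
      from LIMSEQ_subseq_LIMSEQ[OF this r] show "P n (s \<circ> r)"
        unfolding P_def using comp_lim[of "\<lambda>k. Ys k n" s r l] by blast
    qed
    then obtain l where l: "(\<lambda>m. Ys ((D.diagseq \<circ> (+) (Suc i)) m) i) \<longlonglongrightarrow> l"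
      unfolding P_def by blast
    have eq: "(\<lambda>m. Ys ((D.diagseq \<circ> (+) (Suc i)) m) i) = (\<lambda>m. Ys (\<sigma> (m + Suc i)) i)"
      by (rule ext) (simp add: \<sigma>_def add.commute)
    from l have "(\<lambda>m. Ys (\<sigma> (m + Suc i)) i) \<longlonglongrightarrow> l" by (simp only: eq)
    from LIMSEQ_offset[OF this] show ?thesis by blast
  qed
  then obtain g where g: "\<And>i. (\<lambda>m. Ys (\<sigma> m) i) \<longlonglongrightarrow> g i" by metis
  show ?thesis using sm g by blast
qed

lemma limit_config:
  fixes mX :: "'a::polish_space measure" and mY :: "'b::polish_space measure" and x :: "nat \<Rightarrow> 'a"
  assumes X: "mm_space mX" and Y: "mm_space mY" and E: "d_Eur mX mY = 0"
    and xS: "\<And>i. x i \<in> mm_support mX"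
  shows "\<exists>Ys \<sigma> g. strict_mono \<sigma> \<and> (\<forall>i. (\<lambda>m. Ys (\<sigma> m) i) \<longlonglongrightarrow> g i)
     \<and> (\<forall>i j. dist (g i) (g j) = dist (x i) (x j))
     \<and> (\<forall>k I \<rho>. I \<subseteq> {..<k} \<longrightarrow> \<rho> > 0 \<longrightarrow> measure mX (\<Union>i\<in>I. ball (x i) \<rho>)
          \<le> measure mY (\<Union>i\<in>I. cball (Ys k i) (\<rho> + inverse (real (Suc k)))) + inverse (real (Suc k)))"
proof -
  interpret PX: prob_space mX using X by (simp add: mm_space_def)
  interpret PY: prob_space mY using Y by (simp add: mm_space_def)
  have sY: "sets mY = sets borel" using Y by (simp add: mm_space_def)
  have "\<forall>k. \<exists>y. (\<forall>i<k. \<forall>j<k. \<bar>dist (x i) (x j) - dist (y i) (y j)\<bar> \<le> inverse (real (Suc k))) \<and>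
    (\<forall>I. I \<subseteq> {..<k} \<longrightarrow> (\<forall>\<rho>>0. measure mX (\<Union>i\<in>I. ball (x i) \<rho>)
        \<le> measure mY (\<Union>i\<in>I. cball (y i) (\<rho> + inverse (real (Suc k)))) + inverse (real (Suc k))))"
    using approx[OF X Y E _ xS] by simp
  then obtain Ys where Ys1: "\<And>k i j. i < k \<Longrightarrow> j < k \<Longrightarrow> \<bar>dist (x i) (x j) - dist (Ys k i) (Ys k j)\<bar> \<le> inverse (real (Suc k))"
    and Ys2: "\<And>k I \<rho>. I \<subseteq> {..<k} \<Longrightarrow> \<rho> > 0 \<Longrightarrow> measure mX (\<Union>i\<in>I. ball (x i) \<rho>)
        \<le> measure mY (\<Union>i\<in>I. cball (Ys k i) (\<rho> + inverse (real (Suc k)))) + inverse (real (Suc k))"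
    by metis
  have cpt: "compact (closure (range (\<lambda>k. Ys k i)))" for i
  proof (rule tight_compact[OF Y])
    fix \<rho> :: real assume rho: "\<rho> > 0"
    define a0 where "a0 = measure mX (ball (x i) (\<rho>/2))"
    have a0: "a0 > 0" unfolding a0_def using support_ball_pos[OF X xS] rho by simp
    have "\<forall>\<^sub>F k in sequentially. inverse (real (Suc k)) < min (\<rho>/2) (a0/2)"
      by (rule inv_eventually_small) (use rho a0 in simp)
    then obtain k1 where k1: "\<And>k. k \<ge> k1 \<Longrightarrow> inverse (real (Suc k)) < min (\<rho>/2) (a0/2)"
      unfolding eventually_sequentially by blast
    have K0: "a0/2 \<le> measure mY (cball (Ys k i) \<rho>)" if k: "k \<ge> max k1 (Suc i)" for k
    proof -
      have "k1 \<le> k" using k by simp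
      then have kk: "inverse (real (Suc k)) < min (\<rho>/2) (a0/2)" by (rule k1)
      have sub: "{i} \<subseteq> {..<k}" using k by simp
      have h: "measure mX (\<Union>j\<in>{i}. ball (x j) (\<rho>/2))
          \<le> measure mY (\<Union>j\<in>{i}. cball (Ys k j) (\<rho>/2 + inverse (real (Suc k)))) + inverse (real (Suc k))"
        by (rule Ys2[OF sub]) (use rho in simp)
      then have h2: "a0 \<le> measure mY (cball (Ys k i) (\<rho>/2 + inverse (real (Suc k)))) + inverse (real (Suc k))"
        unfolding a0_def by simp
      have kk1: "inverse (real (Suc k)) < \<rho>/2" and kk2: "inverse (real (Suc k)) < a0/2"
        using kk by simp_all
      have cs: "cball (Ys k i) (\<rho>/2 + inverse (real (Suc k))) \<subseteq> cball (Ys k i) \<rho>"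
        by (rule subset_cball) (use kk1 in linarith)
      define Sm where "Sm = measure mY (cball (Ys k i) (\<rho>/2 + inverse (real (Suc k))))"
      define Bg where "Bg = measure mY (cball (Ys k i) \<rho>)"
      define iv where "iv = inverse (real (Suc k))"
      have m0: "Sm \<le> Bg" unfolding Sm_def Bg_def
        by (rule PY.finite_measure_mono[OF cs]) (simp add: sY)
      have h3: "a0 \<le> Sm + iv" using h2 unfolding Sm_def iv_def .
      have k3: "iv < a0/2" using kk2 unfolding iv_def .
      from m0 h3 k3 have "a0/2 \<le> Bg" by linarith
      then show ?thesis unfolding Bg_def .
    qed
    have "\<forall>k\<ge>max k1 (Suc i). a0/2 \<le> measure mY (cball (Ys k i) \<rho>)"
    proof (intro allI impI)
      fix k assume "max k1 (Suc i) \<le> k"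
      then show "a0/2 \<le> measure mY (cball (Ys k i) \<rho>)" by (rule K0)
    qed
    then have e1: "\<exists>k0. \<forall>k\<ge>k0. a0/2 \<le> measure mY (cball (Ys k i) \<rho>)"
      by (rule exI)
    have e2: "a0/2 > 0" using a0 by simp
    show "\<exists>a>0. \<exists>k0. \<forall>k\<ge>k0. a \<le> measure mY (cball (Ys k i) \<rho>)"
    proof (rule exI[of _ "a0/2"], rule conjI)
      show "a0/2 > 0" by (rule e2)
      show "\<exists>k0. \<forall>k\<ge>k0. a0/2 \<le> measure mY (cball (Ys k i) \<rho>)" by (rule e1)
    qed
  qed
  have "\<exists>\<sigma> g. strict_mono \<sigma> \<and> (\<forall>i. (\<lambda>m. Ys (\<sigma> m) i) \<longlonglongrightarrow> g i)"
    by (rule diag_limits) (rule cpt)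
  then obtain \<sigma> g where sm: "strict_mono \<sigma>" and g0: "\<forall>i. (\<lambda>m. Ys (\<sigma> m) i) \<longlonglongrightarrow> g i"
    by blast
  have g: "(\<lambda>m. Ys (\<sigma> m) i) \<longlonglongrightarrow> g i" for i using g0 by blast
  have iso: "dist (g i) (g j) = dist (x i) (x j)" for i j
  proof -
    have A: "(\<lambda>m. dist (Ys (\<sigma> m) i) (Ys (\<sigma> m) j)) \<longlonglongrightarrow> dist (g i) (g j)"
      by (intro tendsto_dist g)
    have bnd: "\<forall>\<^sub>F m in sequentially. \<bar>dist (x i) (x j) - dist (Ys (\<sigma> m) i) (Ys (\<sigma> m) j)\<bar> \<le> inverse (real (Suc m))"
      unfolding eventually_sequentially
    proof (intro exI[of _ "Suc (max i j)"] allI impI)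
      fix m assume m: "m \<ge> Suc (max i j)"
      have sm': "m \<le> \<sigma> m" using seq_suble[OF sm] .
      have "\<bar>dist (x i) (x j) - dist (Ys (\<sigma> m) i) (Ys (\<sigma> m) j)\<bar> \<le> inverse (real (Suc (\<sigma> m)))"
        using m sm' by (intro Ys1) auto
      also have "\<dots> \<le> inverse (real (Suc m))" using sm' by (intro le_imp_inverse_le) auto
      finally show "\<bar>dist (x i) (x j) - dist (Ys (\<sigma> m) i) (Ys (\<sigma> m) j)\<bar> \<le> inverse (real (Suc m))" .
    qed
    have l1: "(\<lambda>m. dist (x i) (x j) - inverse (real (Suc m))) \<longlonglongrightarrow> dist (x i) (x j)"
      using tendsto_diff[OF tendsto_const LIMSEQ_inverse_real_of_nat] by simp
    have l2: "(\<lambda>m. dist (x i) (x j) + inverse (real (Suc m))) \<longlonglongrightarrow> dist (x i) (x j)"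
      using tendsto_add[OF tendsto_const LIMSEQ_inverse_real_of_nat] by simp
    have B: "(\<lambda>m. dist (Ys (\<sigma> m) i) (Ys (\<sigma> m) j)) \<longlonglongrightarrow> dist (x i) (x j)"
    proof (rule tendsto_sandwich[OF _ _ l1 l2])
      show "\<forall>\<^sub>F m in sequentially. dist (x i) (x j) - inverse (real (Suc m)) \<le> dist (Ys (\<sigma> m) i) (Ys (\<sigma> m) j)"
        using bnd by eventually_elim (simp add: abs_le_iff)
      show "\<forall>\<^sub>F m in sequentially. dist (Ys (\<sigma> m) i) (Ys (\<sigma> m) j) \<le> dist (x i) (x j) + inverse (real (Suc m))"
        using bnd by eventually_elim (simp add: abs_le_iff)
    qed
    show ?thesis using LIMSEQ_unique[OF A B] .
  qed
  have G4: "\<forall>k I \<rho>. I \<subseteq> {..<k} \<longrightarrow> \<rho> > 0 \<longrightarrow> measure mX (\<Union>i\<in>I. ball (x i) \<rho>)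
          \<le> measure mY (\<Union>i\<in>I. cball (Ys k i) (\<rho> + inverse (real (Suc k)))) + inverse (real (Suc k))"
  proof (intro allI impI)
    fix k :: nat and I :: "nat set" and \<rho> :: real assume "I \<subseteq> {..<k}" "\<rho> > 0"
    then show "measure mX (\<Union>i\<in>I. ball (x i) \<rho>)
          \<le> measure mY (\<Union>i\<in>I. cball (Ys k i) (\<rho> + inverse (real (Suc k)))) + inverse (real (Suc k))"
      by (rule Ys2)
  qed
  have G2: "\<forall>i. (\<lambda>m. Ys (\<sigma> m) i) \<longlonglongrightarrow> g i" using g by (rule allI)
  have G3: "\<forall>i j. dist (g i) (g j) = dist (x i) (x j)" using iso by (intro allI)
  show ?thesis
    by (rule exI[of _ Ys], rule exI[of _ \<sigma>], rule exI[of _ g]) (intro conjI sm G2 G3 G4)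
qed



lemma closed_ineq:
  fixes mX :: "'a::polish_space measure" and mY :: "'b::polish_space measure"
    and x :: "nat \<Rightarrow> 'a" and F :: "'a \<Rightarrow> 'b" and Ys :: "nat \<Rightarrow> nat \<Rightarrow> 'b"
  assumes X: "mm_space mX" and Y: "mm_space mY"
    and xS: "\<And>i. x i \<in> mm_support mX"
    and xd: "\<And>z e. z \<in> mm_support mX \<Longrightarrow> e > 0 \<Longrightarrow> \<exists>i. dist (x i) z < e"
    and sm: "strict_mono \<sigma>"
    and g: "\<And>i. (\<lambda>m. Ys (\<sigma> m) i) \<longlonglongrightarrow> g i"
    and Fiso: "\<And>u v. u \<in> mm_support mX \<Longrightarrow> v \<in> mm_support mX \<Longrightarrow> dist (F u) (F v) = dist u v"
    and Fx: "\<And>i. F (x i) = g i"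
    and Ys2: "\<And>k I \<rho>. I \<subseteq> {..<k} \<Longrightarrow> \<rho> > 0 \<Longrightarrow> measure mX (\<Union>i\<in>I. ball (x i) \<rho>)
        \<le> measure mY (\<Union>i\<in>I. cball (Ys k i) (\<rho> + inverse (real (Suc k)))) + inverse (real (Suc k))"
    and C: "closed C" and Am: "F -` C \<inter> mm_support mX \<in> sets mX"
  shows "measure mX (F -` C \<inter> mm_support mX) \<le> measure mY C"
proof -
  interpret PX: prob_space mX using X by (simp add: mm_space_def)
  interpret PY: prob_space mY using Y by (simp add: mm_space_def)
  have sX: "sets mX = sets borel" using X by (simp add: mm_space_def)
  have sY: "sets mY = sets borel" using Y by (simp add: mm_space_def)
  define S where "S = mm_support mX"
  define A where "A = F -` C \<inter> S"
  have As: "A \<in> sets mX" using Am unfolding A_def S_def .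
  show ?thesis
  proof (cases "C = {}")
    case True
    then show ?thesis by simp
  next
    case Cne: False
    define T where "T s = {y. infdist y C \<le> s}" for s
    have Tc: "closed (T s)" for s unfolding T_def
      by (intro closed_Collect_le continuous_on_infdist continuous_on_id continuous_on_const)
    have Ts: "T s \<in> sets mY" for s using Tc[of s] sY by simp
    have main: "measure mX A \<le> measure mY (T s) + 2 * \<eta>" if s: "s > 0" and eta: "\<eta> > 0" for s \<eta>
    proof -
      define \<rho> where "\<rho> = s / 4"
      have rho: "\<rho> > 0" using s by (simp add: \<rho>_def)
      define I where "I = {i. \<exists>a\<in>A. dist (x i) a < \<rho>}"
      define U where "U n = (\<Union>i\<in>I \<inter> {..<n}. ball (x i) \<rho>)" for n
      have Uo: "open (U n)" for n unfolding U_def by (intro open_UN) simp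
      have Us: "U n \<in> sets mX" for n using Uo[of n] sX by simp
      have UUo: "open (\<Union>n. U n)" using Uo by (intro open_UN) simp
      have UUs: "(\<Union>n. U n) \<in> sets mX" using UUo sX by simp
      have cover: "A \<subseteq> (\<Union>n. U n)"
      proof
        fix a assume a: "a \<in> A"
        then have "a \<in> S" unfolding A_def by blast
        then obtain i where i: "dist (x i) a < \<rho>" using xd rho unfolding S_def by blast
        then have "i \<in> I" unfolding I_def using a by blast
        then have "a \<in> U (Suc i)" unfolding U_def using i by auto
        then show "a \<in> (\<Union>n. U n)" by blast
      qed
      have inc: "incseq U" unfolding incseq_def U_def by auto
      have lim: "(\<lambda>n. measure mX (U n)) \<longlonglongrightarrow> measure mX (\<Union>n. U n)"
        by (rule PX.finite_Lim_measure_incseq) (use Us inc in auto)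
      have "\<forall>\<^sub>F n in sequentially. measure mX (\<Union>n. U n) - \<eta> < measure mX (U n)"
        by (rule order_tendstoD(1)[OF lim]) (use eta in simp)
      then obtain N where N: "measure mX (\<Union>n. U n) - \<eta> < measure mX (U N)"
        unfolding eventually_sequentially by blast
      have mA: "measure mX A \<le> measure mX (\<Union>n. U n)"
        by (rule PX.finite_measure_mono[OF cover UUs])
      have gi: "infdist (g i) C < \<rho>" if iI: "i \<in> I" for i
      proof -
        obtain a where a: "a \<in> A" "dist (x i) a < \<rho>" using iI unfolding I_def by blast
        then have aS: "a \<in> S" and aC: "F a \<in> C" unfolding A_def by auto
        have "dist (g i) (F a) = dist (x i) a" using Fiso[OF xS aS[unfolded S_def]] Fx by simp
        moreover have "infdist (g i) C \<le> dist (g i) (F a)" by (rule infdist_le[OF aC])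
        ultimately show ?thesis using a(2) by linarith
      qed
      have E1: "\<forall>\<^sub>F m in sequentially. \<forall>i\<in>{..<N}. dist (Ys (\<sigma> m) i) (g i) < \<rho>"
        by (rule eventually_ball_finite) (use g rho in \<open>auto intro: tendstoD\<close>)
      have E2: "\<forall>\<^sub>F m in sequentially. inverse (real (Suc m)) < \<rho>"
        by (rule inv_eventually_small[OF rho])
      have E3: "\<forall>\<^sub>F m in sequentially. inverse (real (Suc m)) < \<eta>"
        by (rule inv_eventually_small[OF eta])
      have E4: "\<forall>\<^sub>F m in sequentially. N \<le> m" by (rule eventually_ge_at_top)
      have "\<forall>\<^sub>F m in sequentially. (\<forall>i\<in>{..<N}. dist (Ys (\<sigma> m) i) (g i) < \<rho>) \<and>
          inverse (real (Suc m)) < \<rho> \<and> inverse (real (Suc m)) < \<eta> \<and> N \<le> m"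
        using eventually_conj[OF E1 eventually_conj[OF E2 eventually_conj[OF E3 E4]]] .
      then obtain m where m1: "\<forall>i\<in>{..<N}. dist (Ys (\<sigma> m) i) (g i) < \<rho>"
        and m2: "inverse (real (Suc m)) < \<rho>" and m3: "inverse (real (Suc m)) < \<eta>" and m4: "N \<le> m"
        unfolding eventually_sequentially by blast
      define k where "k = \<sigma> m"
      have mk: "m \<le> k" unfolding k_def by (rule seq_suble[OF sm])
      have ik: "inverse (real (Suc k)) \<le> inverse (real (Suc m))"
        using mk by (intro le_imp_inverse_le) auto
      define d where "d = inverse (real (Suc k))"
      have d1: "d < \<rho>" and d2: "d < \<eta>" using ik m2 m3 unfolding d_def by linarith+
      have Isub: "I \<inter> {..<N} \<subseteq> {..<k}" using m4 mk by auto
      have h: "measure mX (U N) \<le> measure mY (\<Union>i\<in>I \<inter> {..<N}. cball (Ys k i) (\<rho> + d)) + d"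
        unfolding U_def d_def by (rule Ys2[OF Isub rho])
      have sub: "(\<Union>i\<in>I \<inter> {..<N}. cball (Ys k i) (\<rho> + d)) \<subseteq> T s"
      proof
        fix y assume "y \<in> (\<Union>i\<in>I \<inter> {..<N}. cball (Ys k i) (\<rho> + d))"
        then obtain i where i: "i \<in> I" "i < N" "dist (Ys k i) y \<le> \<rho> + d" by auto
        have c1: "dist (Ys k i) (g i) < \<rho>" using m1 i(2) unfolding k_def by simp
        have c2: "infdist (g i) C < \<rho>" by (rule gi[OF i(1)])
        have c3: "infdist y C \<le> infdist (g i) C + dist y (g i)" by (rule infdist_triangle)
        have c4: "dist y (g i) \<le> dist (Ys k i) y + dist (Ys k i) (g i)" by metric
        have "infdist y C \<le> s" using c1 c2 c3 c4 i(3) d1 unfolding \<rho>_def by linarith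
        then show "y \<in> T s" unfolding T_def by simp
      qed
      have cs: "(\<Union>i\<in>I \<inter> {..<N}. cball (Ys k i) (\<rho> + d)) \<in> sets mY"
        using sY by simp
      have h2: "measure mY (\<Union>i\<in>I \<inter> {..<N}. cball (Ys k i) (\<rho> + d)) \<le> measure mY (T s)"
        by (rule PY.finite_measure_mono[OF sub Ts])
      show ?thesis using mA N h h2 d2 by linarith
    qed
    have step2: "measure mX A \<le> measure mY (T s)" if s: "s > 0" for s
    proof (rule field_le_epsilon)
      fix e :: real assume "e > 0"
      then have "measure mX A \<le> measure mY (T s) + 2 * (e/2)" by (intro main s) simp
      then show "measure mX A \<le> measure mY (T s) + e" by simp
    qed
    define TT where "TT n = T (inverse (real (Suc n)))" for n
    have dT: "antimono_on UNIV TT" unfolding decseq_def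
    proof (intro allI impI)
      fix m n :: nat assume "m \<le> n"
      then have le: "inverse (real (Suc n)) \<le> inverse (real (Suc m))" by (intro le_imp_inverse_le) auto
      show "TT n \<le> TT m"
      proof
        fix y assume "y \<in> TT n"
        then have "infdist y C \<le> inverse (real (Suc n))" unfolding TT_def T_def by blast
        then have "infdist y C \<le> inverse (real (Suc m))" using le by linarith
        then show "y \<in> TT m" unfolding TT_def T_def by blast
      qed
    qed
    have inter: "(\<Inter>n. TT n) = C"
    proof
      show "C \<subseteq> (\<Inter>n. TT n)" unfolding TT_def T_def by (auto simp: infdist_zero)
      show "(\<Inter>n. TT n) \<subseteq> C"
      proof
        fix y assume y: "y \<in> (\<Inter>n. TT n)"
        have "infdist y C \<le> 0"
        proof (rule LIMSEQ_le_const[OF LIMSEQ_inverse_real_of_nat])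
          show "\<exists>N. \<forall>n\<ge>N. infdist y C \<le> inverse (real (Suc n))"
            using y unfolding TT_def T_def by auto
        qed
        then have "infdist y C = 0" using infdist_nonneg[of y C] by linarith
        then show "y \<in> C" using in_closed_iff_infdist_zero[OF C Cne] by simp
      qed
    qed
    have limT: "(\<lambda>n. measure mY (TT n)) \<longlonglongrightarrow> measure mY (\<Inter>n. TT n)"
    proof (rule PY.finite_Lim_measure_decseq)
      show "range TT \<subseteq> sets mY" using Ts unfolding TT_def by blast
      show "antimono_on UNIV TT" by (rule dT)
    qed
    have "measure mX A \<le> measure mY C"
    proof (rule LIMSEQ_le_const[OF limT[unfolded inter]])
      show "\<exists>N. \<forall>n\<ge>N. measure mX A \<le> measure mY (TT n)"
        unfolding TT_def using step2 by simp
    qed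
    then show ?thesis unfolding A_def S_def .
  qed
qed



theorem theorem7p6:
  fixes mX :: "'a::polish_space measure" and mY :: "'b::polish_space measure"
  assumes "mm_space mX" and "mm_space mY"
    and "d_Eur mX mY = 0"
  shows "mm_isomorphic mX mY"
proof -
  note X = assms(1) and Y = assms(2) and E = assms(3)
  interpret PX: prob_space mX using X by (simp add: mm_space_def)
  interpret PY: prob_space mY using Y by (simp add: mm_space_def)
  have sX: "sets mX = sets borel" using X by (simp add: mm_space_def)
  have sY: "sets mY = sets borel" using Y by (simp add: mm_space_def)
  have spX: "space mX = UNIV" using mm_space_space[OF X] .
  have spY: "space mY = UNIV" using mm_space_space[OF Y] .
  define S where "S = mm_support mX"
  define T where "T = mm_support mY"
  have Sc: "closed S" unfolding S_def by (rule support_closed)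
  have Ss: "S \<in> sets mX" using Sc sX by simp
  have Snull: "- S \<in> null_sets mX"
  proof -
    have "- S \<in> sets mX" using Sc sX by (simp add: open_Compl borel_open)
    then show ?thesis using support_null[OF X] unfolding S_def by (simp add: null_sets_def)
  qed
  have restS: "emeasure mX (B \<inter> S) = emeasure mX B" if B: "B \<in> sets mX" for B
  proof -
    have "B \<inter> S = B - (- S)" by blast
    then show ?thesis using emeasure_Diff_null_set[OF Snull B] by simp
  qed
  obtain x :: "nat \<Rightarrow> 'a" where xS0: "\<forall>i. x i \<in> mm_support mX"
    and xd0: "\<forall>z\<in>mm_support mX. \<forall>e>0. \<exists>i. dist (x i) z < e"
    using dense_seq[OF X] by blast
  have xS: "x i \<in> mm_support mX" for i using xS0 by blast
  have xd: "\<exists>i. dist (x i) z < e" if "z \<in> mm_support mX" "e > 0" for z e using xd0 that by blast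
  have "\<exists>Ys \<sigma> g. strict_mono \<sigma> \<and> (\<forall>i. (\<lambda>m. Ys (\<sigma> m) i) \<longlonglongrightarrow> g i)
     \<and> (\<forall>i j. dist (g i) (g j) = dist (x i) (x j))
     \<and> (\<forall>k I \<rho>. I \<subseteq> {..<k} \<longrightarrow> \<rho> > 0 \<longrightarrow> measure mX (\<Union>i\<in>I. ball (x i) \<rho>)
          \<le> measure mY (\<Union>i\<in>I. cball (Ys k i) (\<rho> + inverse (real (Suc k)))) + inverse (real (Suc k)))"
    by (rule limit_config[OF X Y E]) (rule xS)
  then obtain Ys \<sigma> g where sm: "strict_mono \<sigma>" and g0: "\<forall>i. (\<lambda>m. Ys (\<sigma> m) i) \<longlonglongrightarrow> g i"
    and gi0: "\<forall>i j. dist (g i) (g j) = dist (x i) (x j)"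
    and Ys0: "\<forall>k I \<rho>. I \<subseteq> {..<k} \<longrightarrow> \<rho> > 0 \<longrightarrow> measure mX (\<Union>i\<in>I. ball (x i) \<rho>)
          \<le> measure mY (\<Union>i\<in>I. cball (Ys k i) (\<rho> + inverse (real (Suc k)))) + inverse (real (Suc k))"
    by blast
  have g: "(\<lambda>m. Ys (\<sigma> m) i) \<longlonglongrightarrow> g i" for i using g0 by blast
  have gi: "dist (g i) (g j) = dist (x i) (x j)" for i j using gi0 by blast
  have Ys2: "measure mX (\<Union>i\<in>I. ball (x i) \<rho>)
          \<le> measure mY (\<Union>i\<in>I. cball (Ys k i) (\<rho> + inverse (real (Suc k)))) + inverse (real (Suc k))"
    if "I \<subseteq> {..<k}" "\<rho> > 0" for k I \<rho> using Ys0 that by blast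
  have "\<exists>F. (\<forall>u\<in>S. \<forall>v\<in>S. dist (F u) (F v) = dist u v) \<and> (\<forall>i. F (x i) = g i)"
    by (rule iso_extend) (use xS xd gi in \<open>auto simp: S_def\<close>)
  then obtain F where Fiso0: "\<forall>u\<in>S. \<forall>v\<in>S. dist (F u) (F v) = dist u v" and Fx0: "\<forall>i. F (x i) = g i"
    by blast
  define c where "c = F (x 0)"
  define fm where "fm z = (if z \<in> S then F z else c)" for z
  have fmS: "fm z = F z" if "z \<in> S" for z using that unfolding fm_def by simp
  have iso: "dist (fm u) (fm v) = dist u v" if "u \<in> S" "v \<in> S" for u v
    using Fiso0 that by (simp add: fmS)
  have contF: "continuous_on S F"
    unfolding continuous_on_iff
  proof (intro ballI allI impI)
    fix z and e :: real assume z: "z \<in> S" and e: "e > 0"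
    show "\<exists>d>0. \<forall>z'\<in>S. dist z' z < d \<longrightarrow> dist (F z') (F z) < e"
      using Fiso0 z e by (intro exI[of _ e]) auto
  qed
  have fm_meas: "fm \<in> borel_measurable borel"
    unfolding fm_def using Sc by (intro borel_measurable_continuous_on_if contF continuous_on_const) simp
  have fm_measX: "fm \<in> measurable mX borel"
    using fm_meas measurable_cong_sets[OF sX refl] by blast
  have pre_sets: "fm -` B \<in> sets mX" if "B \<in> sets borel" for B
    using measurable_sets[OF fm_measX that] by (simp add: spX)
  have clo: "measure mX (fm -` C \<inter> S) \<le> measure mY C" if C: "closed C" for C
  proof -
    have Am: "fm -` C \<inter> mm_support mX \<in> sets mX"
      using pre_sets[of C] C Ss unfolding S_def by (simp add: borel_closed sets.Int)
    have "measure mX (fm -` C \<inter> mm_support mX) \<le> measure mY C"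
    proof (rule closed_ineq[OF X Y xS xd sm g _ _ Ys2 C Am])
      fix u v assume "u \<in> mm_support mX" "v \<in> mm_support mX"
      then show "dist (fm u) (fm v) = dist u v" using iso unfolding S_def by blast
    next
      fix i show "fm (x i) = g i" using fmS[of "x i"] xS Fx0 unfolding S_def by simp
    qed
    then show ?thesis unfolding S_def .
  qed
  define lam where "lam = distr mX borel fm"
  have slam: "sets lam = sets borel" unfolding lam_def by simp
  have plam: "prob_space lam" unfolding lam_def by (rule PX.prob_space_distr[OF fm_measX])
  interpret PL: prob_space lam by (rule plam)
  have spL: "space lam = UNIV" unfolding lam_def by simp
  have lamB: "emeasure lam B = emeasure mX (fm -` B \<inter> S)" if B: "B \<in> sets borel" for B
  proof -
    have "emeasure lam B = emeasure mX (fm -` B \<inter> space mX)"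
      unfolding lam_def by (rule emeasure_distr[OF fm_measX B])
    also have "\<dots> = emeasure mX (fm -` B)" by (simp add: spX)
    also have "\<dots> = emeasure mX (fm -` B \<inter> S)" using restS[OF pre_sets[OF B]] by simp
    finally show ?thesis .
  qed
  have lam_closed: "measure lam C \<le> measure mY C" if C: "closed C" for C
  proof -
    have "measure lam C = measure mX (fm -` C \<inter> S)"
      using lamB[of C] C PL.emeasure_eq_measure PX.emeasure_eq_measure by (simp add: borel_closed)
    then show ?thesis using clo[OF C] by simp
  qed
  have lam_le: "measure lam B \<le> measure mY B" if B: "B \<in> sets borel" for B
  proof -
    have "emeasure lam B = (SUP K\<in>{K. K \<subseteq> B \<and> compact K}. emeasure lam K)"
      by (rule inner_regular[OF slam _ B]) simp
    also have "\<dots> \<le> emeasure mY B"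
    proof (rule SUP_least)
      fix K assume K: "K \<in> {K. K \<subseteq> B \<and> compact K}"
      then have Kc: "closed K" and KB: "K \<subseteq> B" by (auto intro: compact_imp_closed)
      have "emeasure lam K = ennreal (measure lam K)" by (rule PL.emeasure_eq_measure)
      also have "\<dots> \<le> ennreal (measure mY K)" using lam_closed[OF Kc] by (rule ennreal_leI)
      also have "\<dots> = emeasure mY K" by (rule PY.emeasure_eq_measure[symmetric])
      also have "\<dots> \<le> emeasure mY B" by (rule emeasure_mono[OF KB]) (use B sY in simp)
      finally show "emeasure lam K \<le> emeasure mY B" .
    qed
    finally have "ennreal (measure lam B) \<le> ennreal (measure mY B)"
      using PL.emeasure_eq_measure PY.emeasure_eq_measure by metis
    then show ?thesis by (simp add: ennreal_le_iff)
  qed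
  have lam_eq: "lam = mY"
  proof (rule measure_eqI)
    show "sets lam = sets mY" using slam sY by simp
    fix B assume "B \<in> sets lam"
    then have B: "B \<in> sets borel" using slam by simp
    have Bc: "- B \<in> sets borel" using B by simp
    have l1: "measure lam B \<le> measure mY B" by (rule lam_le[OF B])
    have l2: "measure lam (- B) \<le> measure mY (- B)" by (rule lam_le[OF Bc])
    have c1: "measure lam (- B) = 1 - measure lam B"
      using PL.prob_compl[of B] B slam spL by (simp add: Compl_eq_Diff_UNIV)
    have c2: "measure mY (- B) = 1 - measure mY B"
      using PY.prob_compl[of B] B sY spY by (simp add: Compl_eq_Diff_UNIV)
    have "measure lam B = measure mY B" using l1 l2 c1 c2 by linarith
    then show "emeasure lam B = emeasure mY B"
      using PL.emeasure_eq_measure PY.emeasure_eq_measure by metis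
  qed
  have meas: "emeasure mY B = emeasure mX (fm -` B \<inter> S)" if "B \<in> sets mY" for B
    using lamB[of B] that sY lam_eq by simp
  have img1: "fm ` S \<subseteq> T"
  proof
    fix y assume "y \<in> fm ` S"
    then obtain z where z: "z \<in> S" "y = fm z" by blast
    show "y \<in> T" unfolding T_def mm_support_def
    proof (intro CollectI allI impI)
      fix U assume U: "open U \<and> y \<in> U"
      then obtain e where e: "e > 0" "ball y e \<subseteq> U" using open_contains_ball by blast
      have sub: "ball z e \<inter> S \<subseteq> fm -` U \<inter> S"
      proof
        fix w assume w: "w \<in> ball z e \<inter> S"
        then have "dist (fm z) (fm w) < e" using iso[of z w] z by (simp add: dist_commute)
        then have "fm w \<in> ball y e" using z by simp
        then show "w \<in> fm -` U \<inter> S" using e w by blast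
      qed
      have "0 < emeasure mX (ball z e)" using z e unfolding S_def mm_support_def by simp
      also have "\<dots> = emeasure mX (ball z e \<inter> S)" using restS[of "ball z e"] sX by simp
      also have "\<dots> \<le> emeasure mX (fm -` U \<inter> S)"
        by (rule emeasure_mono[OF sub]) (use pre_sets[of U] U Ss in \<open>simp add: borel_open sets.Int\<close>)
      also have "\<dots> = emeasure mY U" using meas[of U] U sY by (simp add: borel_open)
      finally show "0 < emeasure mY U" .
    qed
  qed
  have cS: "uniform_space_class.complete S" using Sc by (simp add: complete_eq_closed)
  have cimg: "uniform_space_class.complete (fm ` S)"
    unfolding complete_def
  proof (intro allI impI)
    fix f assume f: "(\<forall>n. f n \<in> fm ` S) \<and> Cauchy f"
    then have "\<forall>n. \<exists>z. z \<in> S \<and> f n = fm z" by blast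
    then obtain z where z: "\<And>n. z n \<in> S" and fz: "\<And>n. f n = fm (z n)" by metis
    have dz: "dist (z m) (z n) = dist (f m) (f n)" for m n using iso[OF z z] fz by simp
    have "Cauchy z" using f unfolding Cauchy_def dz by blast
    then obtain l where l: "l \<in> S" "z \<longlonglongrightarrow> l" using cS z unfolding complete_def by blast
    have "(\<lambda>n. dist (z n) l) \<longlonglongrightarrow> 0" using l(2) by (rule tendsto_dist_iff[THEN iffD1])
    moreover have "dist (f n) (fm l) = dist (z n) l" for n using iso[OF z l(1)] fz by simp
    ultimately have "(\<lambda>n. dist (f n) (fm l)) \<longlonglongrightarrow> 0" by simp
    then have "f \<longlonglongrightarrow> fm l" by (rule tendsto_dist_iff[THEN iffD2])
    then show "\<exists>l\<in>fm ` S. f \<longlonglongrightarrow> l" using l(1) by blast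
  qed
  have img_closed: "closed (fm ` S)" by (rule complete_imp_closed[OF cimg])
  have img2: "T \<subseteq> fm ` S"
  proof
    fix y assume yT: "y \<in> T"
    show "y \<in> fm ` S"
    proof (rule ccontr)
      assume ny: "y \<notin> fm ` S"
      have Uo: "open (- (fm ` S))" using img_closed by (simp add: open_Compl)
      have "emeasure mY (- (fm ` S)) > 0" using yT ny Uo unfolding T_def mm_support_def by blast
      moreover have "fm -` (- (fm ` S)) \<inter> S = {}" by blast
      then have "emeasure mY (- (fm ` S)) = 0" using meas[of "- (fm ` S)"] Uo sY by (simp add: borel_open)
      ultimately show False by simp
    qed
  qed
  have inj: "inj_on fm S"
  proof (rule inj_onI)
    fix u v assume "u \<in> S" "v \<in> S" "fm u = fm v"
    then show "u = v" using iso[of u v] by simp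
  qed
  have bij: "bij_betw fm S T" unfolding bij_betw_def using inj img1 img2 by blast
  show ?thesis unfolding mm_isomorphic_def
  proof (rule exI[of _ fm], intro conjI)
    show "bij_betw fm (mm_support mX) (mm_support mY)" using bij unfolding S_def T_def .
    show "\<forall>x\<in>mm_support mX. \<forall>x'\<in>mm_support mX. dist (fm x) (fm x') = dist x x'"
      using iso unfolding S_def by blast
    show "\<forall>B\<in>sets mY. emeasure mY B = emeasure mX (fm -` B \<inter> mm_support mX)"
      using meas unfolding S_def by blast
  qed
qed


end
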